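(* Let $G$ be a topological group with identity $e$. If player ONE does not have a winning strategy in the game $\alpha^{\mathrm{game}}(G,e)$, then $G$ is $\alpha_{2^-}$, and in particular $G$ is Ramsey.
   Context: Convention: a "sequence" is a countably infinite set; a countably infinite set $A$ converges to $x$ if $x\notin A$ and every neighborhood of $x$ contains all but finitely many elements of $A$. $\lim_m x_{nm}=x$ means $x_{nm}\neq x$ for all $m$ and every neighborhood of $x$ contains $x_{nm}$ for all but finitely many $m$. The game $\alpha^{\mathrm{game}}(X,x)$: in the $n$-th inning ONE chooses a sequence $S_n\subseteq X$ converging to $x$, TWO responds with an infinite $T_n\subseteq S_n$; TWO wins if $\bigcup_nT_n$ converges to $x$, otherwise ONE wins. A space $X$ is $\alpha_{2^-}$ if for each $x\in X$, whenever $\lim_m x_{nm}=x$ for all $n$, there are $m_1<m_2<\dots$ with $\bigcup_n\{x_{1m_n},\dots,x_{nm_n}\}$ converging to $x$. A space $X$ is Ramsey if whenever $\lim_m x_{nm}=x_n$ for each $n$ and $\lim_n x_n=x$, there is an infinite $I\subseteq\mathbb N$ such that for each neighborhood $U$ of $x$ there is $k$ with $\{x_{nm}: k<n<m,\ n,m\in I\}\subseteq U$. *)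

theory Defs
  imports Complex_Main "HOL-Library.Countable_Set"
begin

definition conv_set :: "'a::topological_space set \<Rightarrow> 'a \<Rightarrow> bool" where
  "conv_set A x \<longleftrightarrow> countable A \<and> infinite A \<and> x \<notin> A \<and>
     (\<forall>U. open U \<and> x \<in> U \<longrightarrow> finite (A - U))"

definition seq_lim :: "(nat \<Rightarrow> 'a::topological_space) \<Rightarrow> 'a \<Rightarrow> bool" where
  "seq_lim f x \<longleftrightarrow> (\<forall>m. f m \<noteq> x) \<and> f \<longlonglongrightarrow> x"

text \<open>Game alpha^game(X,x). A strategy of ONE maps the list of TWO's previous
  moves T_1,...,T_{n-1} to ONE's next move S_n.  A history is legal if each
  move of TWO is an infinite subset of ONE's move.\<close>
definition legal_history :: "('a set list \<Rightarrow> 'a set) \<Rightarrow> 'a set list \<Rightarrow> bool" where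
  "legal_history \<sigma> h \<longleftrightarrow>
     (\<forall>i<length h. infinite (h ! i) \<and> h ! i \<subseteq> \<sigma> (take i h))"

definition ONE_winning_strategy ::
    "'a::topological_space \<Rightarrow> ('a set list \<Rightarrow> 'a set) \<Rightarrow> bool" where
  "ONE_winning_strategy x \<sigma> \<longleftrightarrow>
     (\<forall>h. legal_history \<sigma> h \<longrightarrow> conv_set (\<sigma> h) x) \<and>
     (\<forall>T :: nat \<Rightarrow> 'a set.
        (\<forall>n. infinite (T n) \<and> T n \<subseteq> \<sigma> (map T [0..<n])) \<longrightarrow>
        \<not> conv_set (\<Union>n. T n) x)"

definition alpha_2_minus :: "'a::topological_space itself \<Rightarrow> bool" where
  "alpha_2_minus _ \<longleftrightarrow>
     (\<forall>(x::'a) (xs :: nat \<Rightarrow> nat \<Rightarrow> 'a). (\<forall>n. seq_lim (xs n) x) \<longrightarrow>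
        (\<exists>m :: nat \<Rightarrow> nat. strict_mono m \<and>
           conv_set (\<Union>n. {xs i (m n) | i. i \<le> n}) x))"

definition Ramsey_space :: "'a::topological_space itself \<Rightarrow> bool" where
  "Ramsey_space _ \<longleftrightarrow>
     (\<forall>(x::'a) (xs :: nat \<Rightarrow> nat \<Rightarrow> 'a) (ys :: nat \<Rightarrow> 'a).
        (\<forall>n. seq_lim (xs n) (ys n)) \<and> seq_lim ys x \<longrightarrow>
        (\<exists>I :: nat set. infinite I \<and>
           (\<forall>U. open U \<and> x \<in> U \<longrightarrow>
              (\<exists>k. {xs n m | n m. k < n \<and> n < m \<and> n \<in> I \<and> m \<in> I} \<subseteq> U))))"

end

theory Submission
  imports Defs
begin

lemma seq_lim_finite_pre:
  fixes f :: "nat \<Rightarrow> 'a::t1_space"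
  assumes "seq_lim f x" "finite F" "x \<notin> F"
  shows "finite {b. f b \<in> F}"
proof -
  have "open (- F)" using assms(2) by (simp add: finite_imp_closed open_Compl)
  moreover have "x \<in> - F" using assms(3) by simp
  ultimately have "eventually (\<lambda>n. f n \<in> - F) sequentially"
    using assms(1) unfolding seq_lim_def by (metis topological_tendstoD)
  then obtain N where "\<forall>n\<ge>N. f n \<notin> F" by (auto simp: eventually_sequentially)
  then have "{b. f b \<in> F} \<subseteq> {..<N}" by (auto simp: not_less[symmetric])
  then show ?thesis using finite_subset by blast
qed

lemma seq_lim_infinite_image:
  fixes f :: "nat \<Rightarrow> 'a::t1_space"
  assumes "seq_lim f x" "infinite C"
  shows "infinite (f ` C)"
proof
  assume fin: "finite (f ` C)"
  have "x \<notin> f ` C" using assms(1) unfolding seq_lim_def by auto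
  then have "finite {b. f b \<in> f ` C}" using seq_lim_finite_pre[OF assms(1) fin] by blast
  moreover have "C \<subseteq> {b. f b \<in> f ` C}" by auto
  ultimately show False using assms(2) finite_subset by blast
qed

lemma seq_lim_conv_image:
  fixes f :: "nat \<Rightarrow> 'a::t1_space"
  assumes "seq_lim f x" "infinite C"
  shows "conv_set (f ` C) x"
  unfolding conv_set_def
proof (intro conjI allI impI)
  show "countable (f ` C)" by simp
  show "infinite (f ` C)" using seq_lim_infinite_image[OF assms] .
  show "x \<notin> f ` C" using assms(1) unfolding seq_lim_def by auto
  fix U assume "open U \<and> x \<in> U"
  then have "eventually (\<lambda>n. f n \<in> U) sequentially"
    using assms(1) unfolding seq_lim_def by (metis topological_tendstoD)
  then obtain N where "\<forall>n\<ge>N. f n \<in> U" by (auto simp: eventually_sequentially)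
  then have "f ` C - U \<subseteq> f ` {..<N}" by (auto simp: not_less[symmetric])
  then show "finite (f ` C - U)" using finite_subset by blast
qed

lemma conv_set_subset:
  assumes "conv_set A x" "B \<subseteq> A" "infinite B"
  shows "conv_set B x"
  using assms unfolding conv_set_def
  by (meson Diff_mono countable_subset finite_subset order_refl subsetD)

lemma key_lemma:
  fixes x :: "'a::t1_space" and ys :: "nat \<Rightarrow> nat \<Rightarrow> 'a"
  assumes nw: "\<not> (\<exists>\<sigma>. ONE_winning_strategy x \<sigma>)"
    and ys: "\<And>n. seq_lim (ys n) x"
  shows "\<exists>D A. conv_set A x \<and> (\<forall>n. infinite (D n)) \<and>
           (\<forall>n i m. i \<le> n \<and> m \<in> D n \<longrightarrow> ys i m \<in> A)"
proof -
  define C where "C h = {m. \<forall>i<length h. ys i m \<in> h ! i}" for h :: "'a set list"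
  define \<sigma> where "\<sigma> h = ys (length h) ` C h" for h
  have Csnoc: "C (h @ [t]) = C h \<inter> {m. ys (length h) m \<in> t}" for h t
    unfolding C_def by (auto simp: nth_append less_Suc_eq)
  have leg_prefix: "legal_history \<sigma> h" if "legal_history \<sigma> (h @ [t])" for h t
    using that unfolding legal_history_def
    by (metis (no_types, lifting) butlast_snoc length_append_singleton less_SucI nth_butlast take_butlast)
  have Cinf: "legal_history \<sigma> h \<Longrightarrow> infinite (C h)" for h
  proof (induction h rule: rev_induct)
    case Nil
    then show ?case by (simp add: C_def)
  next
    case (snoc t h)
    have lh: "legal_history \<sigma> h" using leg_prefix snoc.prems by blast
    have "infinite t" "t \<subseteq> \<sigma> h"
      using snoc.prems unfolding legal_history_def
      by (auto dest!: spec[of _ "length h"] simp: nth_append)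
    then have "t \<subseteq> ys (length h) ` (C h \<inter> {m. ys (length h) m \<in> t})"
      unfolding \<sigma>_def by auto
    then have "infinite (C h \<inter> {m. ys (length h) m \<in> t})"
      using \<open>infinite t\<close> finite_subset by blast
    then show ?case by (simp add: Csnoc)
  qed
  have legal_conv: "\<forall>h. legal_history \<sigma> h \<longrightarrow> conv_set (\<sigma> h) x"
    using Cinf seq_lim_conv_image ys unfolding \<sigma>_def by blast
  from nw have "\<not> ONE_winning_strategy x \<sigma>" by blast
  with legal_conv obtain T :: "nat \<Rightarrow> 'a set" where
    T: "\<forall>n. infinite (T n) \<and> T n \<subseteq> \<sigma> (map T [0..<n])" and cT: "conv_set (\<Union>n. T n) x"
    unfolding ONE_winning_strategy_def by blast
  define D where "D n = C (map T [0..<Suc n])" for n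
  have "legal_history \<sigma> (map T [0..<Suc n])" for n
  proof -
    have "\<forall>i<Suc n. infinite (T i) \<and> T i \<subseteq> \<sigma> (map T [0..<i])" using T by blast
    then show ?thesis unfolding legal_history_def
      by (simp del: upt_Suc add: take_map)
  qed
  then have "infinite (D n)" for n using Cinf unfolding D_def by blast
  moreover have "ys i m \<in> (\<Union>n. T n)" if "i \<le> n" "m \<in> D n" for n i m
  proof -
    have "\<forall>j<length (map T [0..<Suc n]). ys j m \<in> map T [0..<Suc n] ! j"
      using that(2) unfolding D_def C_def by blast
    moreover have "i < length (map T [0..<Suc n])" using that(1) by (simp only: length_map length_upt)
    ultimately have "ys i m \<in> map T [0..<Suc n] ! i" by blast
    moreover have "map T [0..<Suc n] ! i = T i" using that(1) by (metis add_0 diff_zero le_imp_less_Suc nth_map_upt)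
    ultimately show ?thesis by auto
  qed
  ultimately show ?thesis using cT
    by (intro exI[of _ D] exI[of _ "\<Union>n. T n"]) blast
qed

lemma plus_nbhds:
  fixes x :: "'a::topological_group_add"
  assumes "open U" "x \<in> U"
  shows "\<exists>V W. open V \<and> open W \<and> 0 \<in> V \<and> x \<in> W \<and> (\<forall>v\<in>V. \<forall>w\<in>W. v + w \<in> U)"
proof -
  have "eventually (\<lambda>p. fst p + snd p \<in> U) (nhds 0 \<times>\<^sub>F nhds x)"
    using tendsto_add_Pair[of "0::'a" x] assms by (auto dest: topological_tendstoD)
  then obtain Pf Pg where P: "eventually Pf (nhds 0)" "eventually Pg (nhds x)"
    "\<forall>a b. Pf a \<longrightarrow> Pg b \<longrightarrow> a + b \<in> U"
    unfolding eventually_prod_filter by auto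
  from P(1) obtain V where "open V" "0 \<in> V" "\<forall>v\<in>V. Pf v" unfolding eventually_nhds by blast
  moreover from P(2) obtain W where "open W" "x \<in> W" "\<forall>v\<in>W. Pg v" unfolding eventually_nhds by blast
  ultimately show ?thesis using P(3) by blast
qed

lemma conv_set_translate:
  fixes x :: "'a::topological_group_add"
  assumes "conv_set A 0"
  shows "conv_set ((\<lambda>y. y + x) ` A) x"
  unfolding conv_set_def
proof (intro conjI allI impI)
  have inj: "inj (\<lambda>y::'a. y + x)" by (auto intro: injI)
  show "countable ((\<lambda>y. y + x) ` A)" using assms unfolding conv_set_def by simp
  show "infinite ((\<lambda>y. y + x) ` A)" using assms inj unfolding conv_set_def
    by (metis finite_imageD inj_on_subset subset_UNIV)
  show "x \<notin> (\<lambda>y. y + x) ` A" using assms unfolding conv_set_def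
    by (auto simp: image_iff) (metis add.left_neutral add_right_cancel)
  fix U assume U: "open U \<and> x \<in> U"
  have "continuous_on UNIV (\<lambda>y::'a. y + x)" by (intro continuous_intros)
  then have "open ((\<lambda>y. y + x) -` U)"
    using U continuous_on_open_vimage[of UNIV "\<lambda>y::'a. y + x"] by auto
  moreover have "0 \<in> (\<lambda>y. y + x) -` U" using U by simp
  ultimately have "finite (A - (\<lambda>y. y + x) -` U)" using assms unfolding conv_set_def by blast
  moreover have "(\<lambda>y. y + x) ` A - U = (\<lambda>y. y + x) ` (A - (\<lambda>y. y + x) -` U)" by auto
  ultimately show "finite ((\<lambda>y. y + x) ` A - U)" by simp
qed

lemma seq_lim_shift:
  fixes f :: "nat \<Rightarrow> 'a::topological_group_add"
  assumes "seq_lim f x"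
  shows "seq_lim (\<lambda>m. f m - y) (x - y)"
  using assms unfolding seq_lim_def by (auto intro: tendsto_intros simp: diff_eq_eq)

lemma alpha_part:
  fixes x :: "'a::{topological_group_add, t2_space}"
  assumes nw: "\<not> (\<exists>\<sigma>. ONE_winning_strategy (0::'a) \<sigma>)"
    and xs: "\<And>n. seq_lim (xs n) x"
  shows "\<exists>m :: nat \<Rightarrow> nat. strict_mono m \<and> conv_set (\<Union>n. {xs i (m n) | i. i \<le> n}) x"
proof -
  define zs where "zs n m = xs n m - x" for n m
  have zs: "seq_lim (zs n) 0" for n using seq_lim_shift[OF xs[of n], of x] unfolding zs_def by simp
  obtain D A where DA0: "conv_set A 0 \<and> (\<forall>n. infinite (D n)) \<and>
           (\<forall>n i m. i \<le> n \<and> m \<in> D n \<longrightarrow> zs i m \<in> A)"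
    using key_lemma[of 0 zs, OF nw zs] by (elim exE) 
  then have A: "conv_set A 0" and D: "\<And>n. infinite (D n)"
    and DA: "\<And>n i m. i \<le> n \<Longrightarrow> m \<in> D n \<Longrightarrow> zs i m \<in> A" by auto
  have ex: "\<exists>b. b \<in> D n \<and> k < b" for n k
    using D[of n] unfolding infinite_nat_iff_unbounded by blast
  define m where "m = rec_nat (SOME b. b \<in> D 0 \<and> 0 < b) (\<lambda>n c. SOME b. b \<in> D (Suc n) \<and> c < b)"
  have m0: "m 0 \<in> D 0" unfolding m_def using someI_ex[OF ex[of 0 0]] by simp
  have mS: "m (Suc n) \<in> D (Suc n) \<and> m n < m (Suc n)" for n
    unfolding m_def using someI_ex[OF ex[of "Suc n" "m n"]] unfolding m_def by simp
  have mD: "m n \<in> D n" for n using m0 mS by (cases n) auto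
  have sm: "strict_mono m" using mS by (simp add: strict_mono_Suc_iff)
  define B where "B = (\<Union>n. {zs i (m n) | i. i \<le> n})"
  have BA: "B \<subseteq> A" unfolding B_def using DA mD by blast
  have "infinite (range m)" using sm strict_mono_imp_inj_on finite_imageD by (metis infinite_UNIV_nat)
  then have "infinite (zs 0 ` range m)" using seq_lim_infinite_image[OF zs] by blast
  moreover have "zs 0 ` range m \<subseteq> B" unfolding B_def by blast
  ultimately have "infinite B" using finite_subset by blast
  then have "conv_set B 0" using conv_set_subset[OF A BA] by blast
  then have "conv_set ((\<lambda>y. y + x) ` B) x" by (rule conv_set_translate)
  moreover have "(\<lambda>y. y + x) ` B = (\<Union>n. {xs i (m n) | i. i \<le> n})"
    unfolding B_def zs_def
    apply (auto simp: image_iff)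
    subgoal by blast
    subgoal for n i by (rule exI[of _ n], rule exI[of _ "xs i (m n) - x"]) auto
    done
  ultimately show ?thesis using sm by auto
qed


lemma ramsey_part:
  fixes x :: "'a::{topological_group_add, t2_space}"
  assumes nw: "\<not> (\<exists>\<sigma>. ONE_winning_strategy (0::'a) \<sigma>)"
    and xs: "\<And>n. seq_lim (xs n) (ys n)" and yl: "seq_lim ys x"
  shows "\<exists>I :: nat set. infinite I \<and>
           (\<forall>U. open U \<and> x \<in> U \<longrightarrow>
              (\<exists>k. {xs n m | n m. k < n \<and> n < m \<and> n \<in> I \<and> m \<in> I} \<subseteq> U))"
proof -
  define zs where "zs n m = xs n m - ys n" for n m
  have zs: "seq_lim (zs n) 0" for n using seq_lim_shift[OF xs[of n], of "ys n"] unfolding zs_def by simp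
  obtain D A where DA0: "conv_set A 0 \<and> (\<forall>n. infinite (D n)) \<and>
           (\<forall>n i m. i \<le> n \<and> m \<in> D n \<longrightarrow> zs i m \<in> A)"
    using key_lemma[of 0 zs, OF nw zs] by (elim exE)
  then have A: "conv_set A 0" and D: "\<And>n. infinite (D n)"
    and DA: "\<And>n i m. i \<le> n \<Longrightarrow> m \<in> D n \<Longrightarrow> zs i m \<in> A" by auto
  define F where "F c = (\<lambda>(a, b). zs a b) ` ({..c} \<times> {..c})" for c
  have Ffin: "finite (F c)" for c unfolding F_def by simp
  have F0: "0 \<notin> F c" for c using zs unfolding F_def seq_lim_def by auto
  have Fmem: "a \<le> c \<Longrightarrow> b \<le> c \<Longrightarrow> zs a b \<in> F c" for a b c unfolding F_def by force
  have ex: "\<exists>b. c < b \<and> b \<in> D c \<and> (\<forall>a\<le>c. zs a b \<notin> F c)" for c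
  proof -
    have "finite (\<Union>a\<in>{..c}. {b. zs a b \<in> F c})"
      using seq_lim_finite_pre[OF zs Ffin F0] by blast
    then have "finite ((\<Union>a\<in>{..c}. {b. zs a b \<in> F c}) \<union> {..c})" by simp
    then have "infinite (D c - ((\<Union>a\<in>{..c}. {b. zs a b \<in> F c}) \<union> {..c}))"
      using D[of c] by (metis finite_Diff2)
    then obtain b where "b \<in> D c - ((\<Union>a\<in>{..c}. {b. zs a b \<in> F c}) \<union> {..c})"
      by (metis finite.emptyI ex_in_conv)
    then show ?thesis by (intro exI[of _ b]) auto
  qed
  define nx where "nx c = (SOME b. c < b \<and> b \<in> D c \<and> (\<forall>a\<le>c. zs a b \<notin> F c))" for c
  have nxP: "c < nx c \<and> nx c \<in> D c \<and> (\<forall>a\<le>c. zs a (nx c) \<notin> F c)" for c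
    unfolding nx_def by (rule someI_ex[OF ex])
  define j where "j = rec_nat 0 (\<lambda>_ c. nx c)"
  have jS: "j (Suc t) = nx (j t)" for t unfolding j_def by simp
  have sm: "strict_mono j" unfolding strict_mono_Suc_iff using jS nxP by simp
  define I where "I = range j"
  have Iinf: "infinite I" unfolding I_def using sm strict_mono_imp_inj_on
    by (metis finite_imageD infinite_UNIV_nat)
  have pairs: "\<exists>c. a \<le> c \<and> b = nx c" if ab: "a \<in> I" "b \<in> I" "a < b" for a b
  proof -
    obtain s t where st: "a = j s" "b = j t" using ab unfolding I_def by blast
    then have "s < t" using ab(3) sm by (simp add: strict_mono_less)
    then obtain t' where t': "t = Suc t'" "s \<le> t'" by (cases t) auto
    then have "j s \<le> j t'" using sm by (simp add: strict_mono_less_eq)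
    then show ?thesis using st t' jS by auto
  qed
  have main: "\<exists>k. {xs n m | n m. k < n \<and> n < m \<and> n \<in> I \<and> m \<in> I} \<subseteq> U"
    if U: "open U" "x \<in> U" for U
  proof -
    obtain V W where VW: "open V" "open W" "0 \<in> V" "x \<in> W" "\<forall>v\<in>V. \<forall>w\<in>W. v + w \<in> U"
      using plus_nbhds[OF U] by blast
    have "eventually (\<lambda>n. ys n \<in> W) sequentially"
      using yl VW unfolding seq_lim_def by (metis topological_tendstoD)
    then obtain k1 where k1: "\<forall>n\<ge>k1. ys n \<in> W" by (auto simp: eventually_sequentially)
    define S where "S v = {a. \<exists>c. a \<le> c \<and> zs a (nx c) = v}" for v
    have Sfin: "finite (S v)" for v
    proof (cases "S v = {}")
      case True then show ?thesis by simp
    next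
      case False
      then obtain a0 c0 where ac0: "a0 \<le> c0" "zs a0 (nx c0) = v" unfolding S_def by blast
      have "S v \<subseteq> {..< nx c0}"
      proof
        fix a assume "a \<in> S v"
        then obtain c where c: "a \<le> c" "zs a (nx c) = v" unfolding S_def by blast
        have "c < nx c0"
        proof (rule ccontr)
          assume "\<not> c < nx c0"
          then have "zs a0 (nx c0) \<in> F c" using ac0 nxP[of c0] by (intro Fmem) auto
          then show False using nxP[of c] c ac0 by auto
        qed
        then show "a \<in> {..< nx c0}" using c by simp
      qed
      then show ?thesis using finite_subset by blast
    qed
    define Bd where "Bd = {a. \<exists>c. a \<le> c \<and> zs a (nx c) \<in> A - V}"
    have "Bd \<subseteq> (\<Union>v\<in>A - V. S v)" unfolding Bd_def S_def by blast
    moreover have "finite (A - V)" using A VW unfolding conv_set_def by blast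
    ultimately have "finite Bd" using Sfin finite_subset by (metis finite_UN_I)
    then obtain k2 where k2: "\<forall>a\<in>Bd. a \<le> k2" using finite_nat_set_iff_bounded_le by blast
    have "{xs n m | n m. k1 + k2 < n \<and> n < m \<and> n \<in> I \<and> m \<in> I} \<subseteq> U"
    proof
      fix z assume "z \<in> {xs n m | n m. k1 + k2 < n \<and> n < m \<and> n \<in> I \<and> m \<in> I}"
      then obtain n m where nm: "z = xs n m" "k1 + k2 < n" "n < m" "n \<in> I" "m \<in> I" by blast
      obtain c where c: "n \<le> c" "m = nx c" using pairs nm by blast
      have "zs n m \<in> A" using DA[OF c(1)] nxP[of c] c by auto
      moreover have "n \<notin> Bd" using k2 nm by force
      ultimately have "zs n m \<in> V" using c unfolding Bd_def by blast
      moreover have "ys n \<in> W" using k1 nm by simp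
      ultimately have "zs n m + ys n \<in> U" using VW by blast
      then show "z \<in> U" using nm unfolding zs_def by simp
    qed
    then show ?thesis by blast
  qed
  show ?thesis using Iinf main by blast
qed

theorem corollary2p11:
  assumes "\<not> (\<exists>\<sigma>. ONE_winning_strategy (0::'a::{topological_group_add, t2_space}) \<sigma>)"
  shows "alpha_2_minus TYPE('a) \<and> Ramsey_space TYPE('a)"
proof
  show "alpha_2_minus TYPE('a)" unfolding alpha_2_minus_def
    using alpha_part[OF assms] by blast
  show "Ramsey_space TYPE('a)" unfolding Ramsey_space_def
  proof (intro allI impI)
    fix x :: 'a and xs :: "nat \<Rightarrow> nat \<Rightarrow> 'a" and ys :: "nat \<Rightarrow> 'a"
    assume h: "(\<forall>n. seq_lim (xs n) (ys n)) \<and> seq_lim ys x"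
    then show "\<exists>I. infinite I \<and> (\<forall>U. open U \<and> x \<in> U \<longrightarrow>
        (\<exists>k. {xs n m |n m. k < n \<and> n < m \<and> n \<in> I \<and> m \<in> I} \<subseteq> U))"
      using ramsey_part[OF assms, of xs ys x] by blast
  qed
qed

end
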